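(* Let $(G,\Omega)$ be an ample transitive $\ell$-permutation group whose root system $T$ has no minimal element. Let $\Delta\in T$ and $h\in Q_\Delta$. (a) Let $\Delta'\in T$ with $\Delta'\subsetneq\Delta$ and $\Delta'h\neq\Delta'$, and let $1\neq g\in\mathrm{rst}(\Delta')$. Then (i) $[h^{-1},h^g]\neq1$ (in particular $X_h\neq\{1\}$); and (ii) if $f\in G$ and $[[h^{-1},h^g],f]=1$ then $\Delta'f=\Delta'$; in particular every $f$ in the centralizer $\mathrm C_G(X_h)$ satisfies $\Delta'f=\Delta'$. (b) If $\beta\in\mathrm{supp}(h)$ and $f\in G$, then either $\beta f=\beta$ or $[[h^{-1},h^g],f]\neq1$ for some $g\in\mathrm{rst}(\Delta)$.
   Context: An $\ell$-permutation group $(G,\Omega)$: a totally ordered set $\Omega$ with a subgroup $G$ of $\mathrm{Aut}(\Omega,\leqslant)$ (right action) closed under pointwise max and min; transitive if $G$ is transitive on $\Omega$. $\mathrm{supp}(g)=\{\alpha:\alpha g\neq\alpha\}$, $g^f=f^{-1}gf$, $[a,b]=a^{-1}b^{-1}ab$. A convex congruence is a $G$-invariant equivalence relation with convex classes; these are totally ordered by inclusion. For $\alpha\neq\beta$, $V(\alpha,\beta)$ is the intersection of all convex congruences in which $\alpha,\beta$ lie in the same class. $T$ is the set of all classes of the congruences $V(\alpha,\beta)$ ($\alpha\ne\beta$), partially ordered by inclusion; for $\Delta\in T$, $\kappa(\Delta)$ is the congruence $V(\alpha,\beta)$ having $\Delta$ as a class. $\mathrm{rst}(\Delta)=\{g:\mathrm{supp}(g)\subseteq\Delta\}$.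 $Q_\Delta=\{h\in\mathrm{rst}(\Delta):\exists\alpha\in\Delta,\ V(\alpha,\alpha h)=\kappa(\Delta)\}$; $(G,\Omega)$ is ample if $Q_\Delta\neq\emptyset$ for all $\Delta\in T$. For $h\in Q_\Delta$, $X_h=\{[h^{-1},h^g]:g\in G\}$. *)

theory Defs
  imports Main
begin

text \<open>Omega is modelled as the whole of a linearly ordered type 'a.
  Permutations act on the right: alpha g is written g alpha, so the group product
  g h (first g, then h) is the function h o g.\<close>

definition order_aut :: "('a::linorder \<Rightarrow> 'a) \<Rightarrow> bool" where
  "order_aut f \<longleftrightarrow> bij f \<and> strict_mono f"

definition gm :: "('a \<Rightarrow> 'a) \<Rightarrow> ('a \<Rightarrow> 'a) \<Rightarrow> ('a \<Rightarrow> 'a)" where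
  "gm g h = h \<circ> g"

definition ginv :: "('a \<Rightarrow> 'a) \<Rightarrow> ('a \<Rightarrow> 'a)" where
  "ginv g = inv g"

definition gconj :: "('a \<Rightarrow> 'a) \<Rightarrow> ('a \<Rightarrow> 'a) \<Rightarrow> ('a \<Rightarrow> 'a)" where
  "gconj g f = gm (gm (ginv f) g) f"

definition gcomm :: "('a \<Rightarrow> 'a) \<Rightarrow> ('a \<Rightarrow> 'a) \<Rightarrow> ('a \<Rightarrow> 'a)" where
  "gcomm a b = gm (gm (gm (ginv a) (ginv b)) a) b"

definition l_perm_group :: "('a::linorder \<Rightarrow> 'a) set \<Rightarrow> bool" where
  "l_perm_group G \<longleftrightarrow>
     (\<forall>g\<in>G. order_aut g) \<and> id \<in> G \<and>
     (\<forall>f\<in>G. \<forall>g\<in>G. gm f g \<in> G) \<and> (\<forall>g\<in>G. ginv g \<in> G) \<and>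
     (\<forall>f\<in>G. \<forall>g\<in>G. (\<lambda>x. max (f x) (g x)) \<in> G \<and> (\<lambda>x. min (f x) (g x)) \<in> G)"

definition transitive_grp :: "('a \<Rightarrow> 'a) set \<Rightarrow> bool" where
  "transitive_grp G \<longleftrightarrow> (\<forall>\<alpha> \<beta>. \<exists>g\<in>G. g \<alpha> = \<beta>)"

definition supp :: "('a \<Rightarrow> 'a) \<Rightarrow> 'a set" where
  "supp g = {\<alpha>. g \<alpha> \<noteq> \<alpha>}"

definition convex_congruence :: "('a::linorder \<Rightarrow> 'a) set \<Rightarrow> ('a \<times> 'a) set \<Rightarrow> bool" where
  "convex_congruence G E \<longleftrightarrow> equiv UNIV E \<and>
     (\<forall>g\<in>G. \<forall>\<alpha> \<beta>. (\<alpha>, \<beta>) \<in> E \<longrightarrow> (g \<alpha>, g \<beta>) \<in> E) \<and>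
     (\<forall>\<alpha> \<beta> \<gamma>. (\<alpha>, \<beta>) \<in> E \<and> \<alpha> \<le> \<gamma> \<and> \<gamma> \<le> \<beta> \<longrightarrow> (\<alpha>, \<gamma>) \<in> E)"

definition V :: "('a::linorder \<Rightarrow> 'a) set \<Rightarrow> 'a \<Rightarrow> 'a \<Rightarrow> ('a \<times> 'a) set" where
  "V G \<alpha> \<beta> = \<Inter> {E. convex_congruence G E \<and> (\<alpha>, \<beta>) \<in> E}"

definition roots :: "('a::linorder \<Rightarrow> 'a) set \<Rightarrow> 'a set set" where
  "roots G = {\<Delta>. \<exists>\<alpha> \<beta>. \<alpha> \<noteq> \<beta> \<and> \<Delta> \<in> UNIV // V G \<alpha> \<beta>}"

definition kappa :: "('a::linorder \<Rightarrow> 'a) set \<Rightarrow> 'a set \<Rightarrow> ('a \<times> 'a) set" where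
  "kappa G \<Delta> = (THE E. \<exists>\<alpha> \<beta>. \<alpha> \<noteq> \<beta> \<and> E = V G \<alpha> \<beta> \<and> \<Delta> \<in> UNIV // E)"

definition rst :: "('a \<Rightarrow> 'a) set \<Rightarrow> 'a set \<Rightarrow> ('a \<Rightarrow> 'a) set" where
  "rst G \<Delta> = {g\<in>G. supp g \<subseteq> \<Delta>}"

definition Q :: "('a::linorder \<Rightarrow> 'a) set \<Rightarrow> 'a set \<Rightarrow> ('a \<Rightarrow> 'a) set" where
  "Q G \<Delta> = {h\<in>rst G \<Delta>. \<exists>\<alpha>\<in>\<Delta>. V G \<alpha> (h \<alpha>) = kappa G \<Delta>}"

definition ample :: "('a::linorder \<Rightarrow> 'a) set \<Rightarrow> bool" where
  "ample G \<longleftrightarrow> (\<forall>\<Delta>\<in>roots G. Q G \<Delta> \<noteq> {})"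

definition X :: "('a \<Rightarrow> 'a) set \<Rightarrow> ('a \<Rightarrow> 'a) \<Rightarrow> ('a \<Rightarrow> 'a) set" where
  "X G h = {gcomm (ginv h) (gconj h g) | g. g \<in> G}"

definition centralizer :: "('a \<Rightarrow> 'a) set \<Rightarrow> ('a \<Rightarrow> 'a) set \<Rightarrow> ('a \<Rightarrow> 'a) set" where
  "centralizer G S = {f\<in>G. \<forall>x\<in>S. gm x f = gm f x}"

end

theory Submission
  imports Defs
begin

lemma lp_bij: "l_perm_group G \<Longrightarrow> g \<in> G \<Longrightarrow> bij g"
  by (simp add: l_perm_group_def order_aut_def)
lemma lp_mono: "l_perm_group G \<Longrightarrow> g \<in> G \<Longrightarrow> strict_mono g"
  by (simp add: l_perm_group_def order_aut_def)
lemma lp_inv: "l_perm_group G \<Longrightarrow> g \<in> G \<Longrightarrow> inv g \<in> G"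
  by (simp add: l_perm_group_def ginv_def)
lemma lp_gm: "l_perm_group G \<Longrightarrow> f \<in> G \<Longrightarrow> g \<in> G \<Longrightarrow> gm f g \<in> G"
  by (simp add: l_perm_group_def)
lemma lp_ginv: "l_perm_group G \<Longrightarrow> g \<in> G \<Longrightarrow> ginv g \<in> G"
  by (simp add: l_perm_group_def)

lemma cc_refl: "convex_congruence G E \<Longrightarrow> (x,x) \<in> E"
  by (simp add: convex_congruence_def equiv_def refl_on_def)
lemma cc_sym: "convex_congruence G E \<Longrightarrow> (x,y) \<in> E \<Longrightarrow> (y,x) \<in> E"
  by (meson convex_congruence_def equiv_def symD)
lemma cc_trans: "convex_congruence G E \<Longrightarrow> (x,y) \<in> E \<Longrightarrow> (y,z) \<in> E \<Longrightarrow> (x,z) \<in> E"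
  by (meson convex_congruence_def equiv_def transD)
lemma cc_conv: "convex_congruence G E \<Longrightarrow> (x,y) \<in> E \<Longrightarrow> x \<le> z \<Longrightarrow> z \<le> y \<Longrightarrow> (x,z) \<in> E"
  by (simp add: convex_congruence_def)
lemma cc_app: "convex_congruence G E \<Longrightarrow> g \<in> G \<Longrightarrow> (x,y) \<in> E \<Longrightarrow> (g x, g y) \<in> E"
  by (simp add: convex_congruence_def)
lemma cc_unapp: "convex_congruence G E \<Longrightarrow> l_perm_group G \<Longrightarrow> g \<in> G \<Longrightarrow> (g x, g y) \<in> E \<Longrightarrow> (x,y) \<in> E"
proof -
  assume a: "convex_congruence G E" "l_perm_group G" "g \<in> G" "(g x, g y) \<in> E"
  have "inv g \<in> G" using a lp_inv by blast
  hence "(inv g (g x), inv g (g y)) \<in> E" using a cc_app by blast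
  moreover have "inj g" using a lp_bij bij_is_inj by blast
  ultimately show ?thesis by simp
qed

lemma cc_V: "convex_congruence G (V G p q)"
proof -
  let ?S = "{E. convex_congruence G E \<and> (p,q) \<in> E}"
  have "equiv UNIV (\<Inter>?S)"
    unfolding equiv_def refl_on_def sym_def trans_def
  proof (intro conjI allI impI ballI)
    show "\<Inter>?S \<subseteq> UNIV \<times> UNIV" by simp
  qed (use cc_refl cc_sym cc_trans in blast)+
  moreover have "\<forall>g\<in>G. \<forall>\<alpha> \<beta>. (\<alpha>, \<beta>) \<in> \<Inter>?S \<longrightarrow> (g \<alpha>, g \<beta>) \<in> \<Inter>?S"
    using cc_app by blast
  moreover have "\<forall>\<alpha> \<beta> \<gamma>. (\<alpha>, \<beta>) \<in> \<Inter>?S \<and> \<alpha> \<le> \<gamma> \<and> \<gamma> \<le> \<beta> \<longrightarrow> (\<alpha>, \<gamma>) \<in> \<Inter>?S"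
    using cc_conv by blast
  ultimately show ?thesis unfolding V_def convex_congruence_def[of G "\<Inter>?S"] by blast
qed

lemma V_mem: "(p,q) \<in> V G p q" by (auto simp: V_def)
lemma V_least: "convex_congruence G E \<Longrightarrow> (p,q) \<in> E \<Longrightarrow> V G p q \<subseteq> E"
  by (auto simp: V_def)
lemma cc_Id: "convex_congruence G Id"
  by (auto simp: convex_congruence_def equiv_def refl_on_def sym_def trans_def)

lemma cc_sep:
  fixes x :: "'a::linorder"
  assumes cc: "convex_congruence G E" and "x < y" "(x,y) \<notin> E" "(x,x') \<in> E" "(y,y') \<in> E"
  shows "x' < y'"
proof (rule ccontr)
  assume "\<not> x' < y'" hence le: "y' \<le> x'" by simp
  show False
  proof (cases "y \<le> x'")
    case True
    then have "(x,y) \<in> E" using cc_conv[OF cc assms(4)] \<open>x<y\<close> by simp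
    thus False using assms by blast
  next
    case False
    have "(y',y) \<in> E" using cc_sym[OF cc assms(5)] .
    hence "(y',x') \<in> E" using cc_conv[OF cc] le False by simp
    hence "(x,y) \<in> E" using cc_trans[OF cc] cc_sym[OF cc] assms by blast
    thus False using assms by blast
  qed
qed

lemma cc_sub:
  assumes lp: "l_perm_group G" and tr: "transitive_grp G"
    and E: "convex_congruence G E" and F: "convex_congruence G F"
    and sub: "E``{a} \<subseteq> F``{b}"
  shows "E \<subseteq> F"
proof
  fix pq assume pq: "pq \<in> E"
  obtain p q where pqd: "pq = (p,q)" by fastforce
  have "(b,a) \<in> F" using sub cc_refl[OF E, of a] by blast
  obtain g where g: "g \<in> G" "g a = p" using tr unfolding transitive_grp_def by blast
  have bg: "bij g" using lp g lp_bij by blast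
  have "(inv g p, inv g q) \<in> E" using cc_app[OF E lp_inv[OF lp g(1)]] pq pqd by simp
  moreover have "inv g p = a" using g bg by (metis bij_is_inj inv_f_f)
  ultimately have "(a, inv g q) \<in> E" by simp
  hence "(b, inv g q) \<in> F" using sub by blast
  hence "(a, inv g q) \<in> F" using cc_trans[OF F] cc_sym[OF F] \<open>(b,a) \<in> F\<close> by blast
  hence "(g a, g (inv g q)) \<in> F" using cc_app[OF F g(1)] by blast
  thus "pq \<in> F" using g bg pqd by (simp add: bij_is_surj surj_f_inv_f)
qed

lemma roots_iff: "\<Delta> \<in> roots G \<longleftrightarrow> (\<exists>p q z. p \<noteq> q \<and> \<Delta> = V G p q `` {z})"
  by (auto simp: roots_def quotient_def)


lemma part_a:
  fixes G :: "('a::linorder \<Rightarrow> 'a) set"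
  assumes lp: "l_perm_group G" and cc: "convex_congruence G E"
    and D: "D = E``{x0}" and hG: "h \<in> G" and hD: "h ` D \<noteq> D"
    and gG: "g \<in> G" and gs: "supp g \<subseteq> D" and g1: "g \<noteq> id"
  shows "gcomm (ginv h) (gconj h g) \<noteq> id \<and>
    (\<forall>f\<in>G. (\<forall>x. f (gcomm (ginv h) (gconj h g) x) = gcomm (ginv h) (gconj h g) (f x)) \<longrightarrow> f ` D = D)"
proof -
  define hi where "hi = inv h"
  define gi where "gi = inv g"
  define c where "c = gcomm (ginv h) (gconj h g)"
  have bh: "bij h" and bg: "bij g" using lp hG gG lp_bij by auto
  have hiG: "hi \<in> G" using lp_inv[OF lp hG] hi_def by simp
  have hhi: "\<And>x. h (hi x) = x" and hih: "\<And>x. hi (h x) = x"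
    using bh by (simp_all add: hi_def bij_is_surj surj_f_inv_f bij_is_inj inv_f_f)
  have ggi: "\<And>x. g (gi x) = x" and gig: "\<And>x. gi (g x) = x"
    using bg by (simp_all add: gi_def bij_is_surj surj_f_inv_f bij_is_inj inv_f_f)
  have ii: "inv hi = h" using hhi hih by (simp add: hi_def inv_equality)
  have ik: "inv (g \<circ> (h \<circ> gi)) = g \<circ> (hi \<circ> gi)"
    by (rule inv_equality) (simp_all add: hhi hih ggi gig)
  have c_eq: "\<And>x. c x = g (h (gi (hi (g (hi (gi (h x)))))))"
    unfolding c_def gcomm_def gconj_def gm_def ginv_def
    using ik ii by (simp add: hi_def[symmetric] gi_def[symmetric])
  have mD: "\<And>x. x \<in> D \<longleftrightarrow> (x0,x) \<in> E" using D by simp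
  have Dcl: "\<And>x y. x \<in> D \<Longrightarrow> (x,y) \<in> E \<Longrightarrow> y \<in> D" using mD cc_trans[OF cc] by blast
  have DE: "\<And>x y. x \<in> D \<Longrightarrow> y \<in> D \<Longrightarrow> (x,y) \<in> E" using mD cc_trans[OF cc] cc_sym[OF cc] by blast
  have gout: "\<And>x. x \<notin> D \<Longrightarrow> g x = x" using gs by (auto simp: supp_def)
  have giout: "\<And>x. x \<notin> D \<Longrightarrow> gi x = x" using gout gig by metis
  have gin: "\<And>x. x \<in> D \<Longrightarrow> g x \<in> D" using gout gig by metis
  have giin: "\<And>x. x \<in> D \<Longrightarrow> gi x \<in> D" using gout ggi by metis
  have happ: "\<And>x y. (x,y) \<in> E \<Longrightarrow> (h x, h y) \<in> E" using cc_app[OF cc hG] by blast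
  have hiapp: "\<And>x y. (x,y) \<in> E \<Longrightarrow> (hi x, hi y) \<in> E" using cc_app[OF cc hiG] by blast
  have hmono: "strict_mono h" using lp_mono[OF lp hG] .
  have himono: "strict_mono hi" using lp_mono[OF lp hiG] .
  have x0D: "x0 \<in> D" using mD cc_refl[OF cc] by blast
  have hx0: "(x0, h x0) \<notin> E"
  proof
    assume a: "(x0, h x0) \<in> E"
    have "h ` D = D"
    proof
      show "h ` D \<subseteq> D" using a happ mD cc_trans[OF cc] by blast
      show "D \<subseteq> h ` D"
      proof
        fix y assume y: "y \<in> D"
        have "(hi x0, x0) \<in> E" using hiapp[OF a] hih by simp
        hence "hi y \<in> D" using hiapp[of x0 y] y mD cc_trans[OF cc] cc_sym[OF cc] by blast
        thus "y \<in> h ` D" using hhi by (metis image_eqI)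
      qed
    qed
    thus False using hD by simp
  qed
  have hout: "\<And>x. x \<in> D \<Longrightarrow> h x \<notin> D"
  proof
    fix x assume x: "x \<in> D" "h x \<in> D"
    have "(h x0, h x) \<in> E" using happ mD x by blast
    thus False using hx0 x DE cc_trans[OF cc] cc_sym[OF cc] x0D by blast
  qed
  have hiout: "\<And>x. x \<in> D \<Longrightarrow> hi x \<notin> D" using hout hhi by metis
  have hhout: "\<And>x. x \<in> D \<Longrightarrow> h (h x) \<notin> D"
  proof
    fix x assume x: "x \<in> D" "h (h x) \<in> D"
    have ne: "h x \<noteq> x" using hout x by metis
    have xe: "(x, h (h x)) \<in> E" using DE x by blast
    show False
    proof (cases "x < h x")
      case True
      hence "h x < h (h x)" using hmono strict_monoD by blast
      hence "(x, h x) \<in> E" using cc_conv[OF cc xe] True by simp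
      thus False using Dcl x hout by blast
    next
      case False
      hence lt: "h x < x" using ne by simp
      hence "h (h x) < h x" using hmono strict_monoD by blast
      hence "(h (h x), h x) \<in> E" using cc_conv[OF cc cc_sym[OF cc xe]] lt by simp
      thus False using Dcl x hout by blast
    qed
  qed
  have hihiout: "\<And>x. x \<in> D \<Longrightarrow> hi (hi x) \<notin> D" using hhout hhi by metis
  obtain b where gb: "g b \<noteq> b" using g1 by (meson eq_id_iff)
  have bD: "b \<in> D" using gb gs by (auto simp: supp_def)
  have gibb: "gi b \<noteq> b" using gb ggi by metis
  have cb: "\<And>x. x \<in> D \<Longrightarrow> c x = g (g x)"
    using c_eq hout giout hih gin hiout hhi by simp
  have gg: "g (g b) \<noteq> b"
  proof (cases "b < g b")
    case True thus ?thesis using lp_mono[OF lp gG] by (metis order_less_trans strict_monoD order_less_irrefl)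
  next
    case False hence "g b < b" using gb by simp
    thus ?thesis using lp_mono[OF lp gG] by (metis order_less_trans strict_monoD order_less_irrefl)
  qed
  have cb1: "c b \<noteq> b" using cb bD gg by simp
  have part1: "c \<noteq> id" using cb1 by auto
  define a where "a = hi b"
  define d where "d = h b"
  have ca: "c a = hi (gi b)"
    unfolding a_def using c_eq hhi giin bD hiout gout hihiout giout by simp
  have cd: "c d = h (gi b)"
    unfolding d_def using c_eq hhout bD giout hih hout gout giin by simp
  have ca1: "c a \<noteq> a" using ca gibb hhi unfolding a_def by metis
  have cd1: "c d \<noteq> d" using cd gibb hih unfolding d_def by metis
  have cout: "\<And>x. (x,a) \<notin> E \<Longrightarrow> (x,b) \<notin> E \<Longrightarrow> (x,d) \<notin> E \<Longrightarrow> c x = x"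
  proof -
    fix x assume n: "(x,a) \<notin> E" "(x,b) \<notin> E" "(x,d) \<notin> E"
    have xD: "x \<notin> D" using n DE bD by blast
    have hxD: "h x \<notin> D"
    proof
      assume "h x \<in> D" hence "(h x, b) \<in> E" using DE bD by blast
      hence "(x, a) \<in> E" using hiapp hih a_def by metis
      thus False using n by blast
    qed
    have hixD: "hi x \<notin> D"
    proof
      assume "hi x \<in> D" hence "(hi x, b) \<in> E" using DE bD by blast
      hence "(x, d) \<in> E" using happ hhi d_def by metis
      thus False using n by blast
    qed
    show "c x = x" using c_eq giout hxD hih gout xD hixD hhi by simp
  qed
  have aD: "a \<notin> D" using hiout bD a_def by simp
  have dD: "d \<notin> D" using hout bD d_def by simp
  have nab: "(a,b) \<notin> E" using aD bD Dcl cc_sym[OF cc] by blast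
  have nbd: "(b,d) \<notin> E" using dD bD Dcl by blast
  have nad: "(a,d) \<notin> E"
  proof
    assume "(a,d) \<in> E" hence "(h a, h d) \<in> E" by (rule happ)
    hence "(b, h (h b)) \<in> E" using a_def d_def hhi by simp
    thus False using Dcl bD hhout by blast
  qed
  have part2: "\<forall>f\<in>G. (\<forall>x. f (c x) = c (f x)) \<longrightarrow> f ` D = D"
  proof (intro ballI impI)
    fix f assume fG: "f \<in> G" and com: "\<forall>x. f (c x) = c (f x)"
    have bf: "bij f" using lp fG lp_bij by blast
    have fmono: "strict_mono f" using lp fG lp_mono by blast
    have fsupp: "\<And>x. c x \<noteq> x \<Longrightarrow> c (f x) \<noteq> f x"
      using com bf by (metis bij_is_inj injD)
    have fre: "\<And>x y. (f x, f y) \<in> E \<Longrightarrow> (x,y) \<in> E" using cc_unapp[OF cc lp fG] by blast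
    have fap: "\<And>x y. (x, y) \<in> E \<Longrightarrow> (f x,f y) \<in> E" using cc_app[OF cc fG] by blast
    have three: "\<And>x. c (f x) \<noteq> f x \<Longrightarrow> (f x, a) \<in> E \<or> (f x, b) \<in> E \<or> (f x, d) \<in> E"
      using cout by blast
    have Fa: "(f a, a) \<in> E \<or> (f a, b) \<in> E \<or> (f a, d) \<in> E" using three fsupp ca1 by blast
    have Fb: "(f b, a) \<in> E \<or> (f b, b) \<in> E \<or> (f b, d) \<in> E" using three fsupp cb1 by blast
    have Fd: "(f d, a) \<in> E \<or> (f d, b) \<in> E \<or> (f d, d) \<in> E" using three fsupp cd1 by blast
    have sym: "\<And>x y. (x,y) \<in> E \<Longrightarrow> (y,x) \<in> E" using cc_sym[OF cc] by blast
    have tr: "\<And>x y z. (x,y) \<in> E \<Longrightarrow> (y,z) \<in> E \<Longrightarrow> (x,z) \<in> E" using cc_trans[OF cc] by blast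
    have sep: "\<And>x y x' y'. x < y \<Longrightarrow> (x,y) \<notin> E \<Longrightarrow> (x,x') \<in> E \<Longrightarrow> (y,y') \<in> E \<Longrightarrow> x' < y'"
      using cc_sep[OF cc] by blast
    have nfab: "(f a, f b) \<notin> E" using fre nab by blast
    have nfbd: "(f b, f d) \<notin> E" using fre nbd by blast
    have nfad: "(f a, f d) \<notin> E" using fre nad by blast
    have bd: "b \<noteq> d" using bD dD by blast
    have fbb: "(f b, b) \<in> E"
    proof (cases "b < d")
      case True
      have ab: "a < b" using True himono strict_monoD a_def d_def hih by metis
      have ad: "a < d" using ab True by simp
      have o1: "f a < f b" "f b < f d" using ab True fmono strict_monoD by blast+
      show ?thesis
      proof (rule ccontr)
        assume nb: "(f b, b) \<notin> E"
        show False
        proof (cases "(f b, a) \<in> E")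
          case True
          then show False using Fa o1 sep[OF ab nab] sep[OF ad nad] sym tr nfab
            by (meson order.asym)
        next
          case False
          hence fbd: "(f b, d) \<in> E" using Fb nb by blast
          show False using Fd o1 sep[OF ad nad] sep[OF True nbd] sym tr nfbd fbd
            by (meson order.asym)
        qed
      qed
    next
      case False
      hence db: "d < b" using bd by simp
      have ba: "b < a" using db himono strict_monoD a_def d_def hih by metis
      have da: "d < a" using ba db by simp
      have o1: "f b < f a" "f d < f b" using ba db fmono strict_monoD by blast+
      show ?thesis
      proof (rule ccontr)
        assume nb: "(f b, b) \<notin> E"
        have nba: "(b,a) \<notin> E" using nab sym by blast
        have ndb: "(d,b) \<notin> E" using nbd sym by blast
        have nda: "(d,a) \<notin> E" using nad sym by blast
        show False
        proof (cases "(f b, a) \<in> E")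
          case True
          then show False using Fa o1 sep[OF ba nba] sep[OF da nda] sym tr nfab
            by (meson order.asym)
        next
          case False
          hence fbd: "(f b, d) \<in> E" using Fb nb by blast
          show False using Fd o1 sep[OF da nda] sep[OF db ndb] sym tr nfbd fbd
            by (meson order.asym)
        qed
      qed
    qed
    show "f ` D = D"
    proof
      show "f ` D \<subseteq> D"
      proof
        fix y assume "y \<in> f ` D"
        then obtain x where x: "x \<in> D" "y = f x" by blast
        have "(f b, f x) \<in> E" using fap DE bD x by blast
        thus "y \<in> D" using x fbb Dcl bD sym tr by blast
      qed
      show "D \<subseteq> f ` D"
      proof
        fix y assume y: "y \<in> D"
        have fi: "f (inv f y) = y" using bf by (simp add: bij_is_surj surj_f_inv_f)
        have "(f b, f (inv f y)) \<in> E" using fi fbb y DE bD sym tr by metis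
        hence "(b, inv f y) \<in> E" by (rule fre)
        hence "inv f y \<in> D" using Dcl bD by blast
        thus "y \<in> f ` D" using fi by (metis image_eqI)
      qed
    qed
  qed
  show ?thesis using part1 part2 c_def by simp
qed


lemma shrink:
  assumes lp: "l_perm_group G" and tr: "transitive_grp G"
    and nm: "\<forall>\<Gamma>\<in>roots G. \<exists>\<Gamma>'\<in>roots G. \<Gamma>' \<subset> \<Gamma>" and xy: "x \<noteq> y"
  shows "\<exists>u v. u \<noteq> v \<and> V G u v \<subseteq> V G x y \<and> (x,y) \<notin> V G u v"
proof -
  have "V G x y `` {x} \<in> roots G" using xy roots_iff by blast
  then obtain \<Gamma>' where g': "\<Gamma>' \<in> roots G" "\<Gamma>' \<subset> V G x y `` {x}" using nm by blast
  then obtain u v z where uv: "u \<noteq> v" "\<Gamma>' = V G u v `` {z}" using roots_iff by metis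
  have sub: "V G u v \<subseteq> V G x y" using cc_sub[OF lp tr cc_V cc_V] g' uv by blast
  have "(x,y) \<notin> V G u v"
  proof
    assume "(x,y) \<in> V G u v"
    hence "V G x y \<subseteq> V G u v" using V_least cc_V by blast
    hence eq: "V G x y = V G u v" using sub by blast
    have "z \<in> \<Gamma>'" using uv cc_refl[OF cc_V] by blast
    hence "(x,z) \<in> V G x y" using g' by blast
    hence "V G x y `` {x} = V G x y `` {z}"
      using equiv_class_eq cc_V unfolding convex_congruence_def by metis
    thus False using g' uv eq by simp
  qed
  thus ?thesis using uv sub by blast
qed

lemma kappa_eq:
  assumes lp: "l_perm_group G" and tr: "transitive_grp G"
    and uv: "u \<noteq> v" and D: "D = V G u v `` {z}"
  shows "kappa G D = V G u v"
  unfolding kappa_def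
proof (rule the_equality)
  show "\<exists>\<alpha> \<beta>. \<alpha> \<noteq> \<beta> \<and> V G u v = V G \<alpha> \<beta> \<and> D \<in> UNIV // V G u v"
    using uv D by (auto simp: quotient_def)
  fix E assume "\<exists>\<alpha> \<beta>. \<alpha> \<noteq> \<beta> \<and> E = V G \<alpha> \<beta> \<and> D \<in> UNIV // E"
  then obtain p q w where E: "E = V G p q" "D = E `` {w}" by (auto simp: quotient_def)
  show "E = V G u v"
    using cc_sub[OF lp tr cc_V cc_V] E D by (metis order_refl subset_antisym)
qed

lemma nontriv:
  assumes lp: "l_perm_group G" and tr: "transitive_grp G" and am: "ample G"
    and uv: "u \<noteq> v" and D: "D = V G u v `` {z}"
  shows "\<exists>g\<in>rst G D. g \<noteq> id"
proof -
  have "D \<in> roots G" using uv D roots_iff by blast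
  then obtain g where g: "g \<in> Q G D" using am unfolding ample_def by blast
  then obtain \<alpha> where a: "V G \<alpha> (g \<alpha>) = kappa G D" "g \<in> rst G D" unfolding Q_def by blast
  have "g \<noteq> id"
  proof
    assume "g = id"
    hence "V G \<alpha> \<alpha> = V G u v" using a kappa_eq[OF lp tr uv D] by simp
    moreover have "V G \<alpha> \<alpha> \<subseteq> Id" using V_least cc_Id by blast
    ultimately show False using V_mem[of u v G] uv by blast
  qed
  thus ?thesis using a by blast
qed


lemma comm_G: "l_perm_group G \<Longrightarrow> h \<in> G \<Longrightarrow> g \<in> G \<Longrightarrow> gcomm (ginv h) (gconj h g) \<in> G"
  unfolding gcomm_def gconj_def by (simp add: lp_gm lp_ginv)

lemma comm_id:
  assumes lp: "l_perm_group G" and cG: "c \<in> G" and fG: "f \<in> G" and e: "gcomm c f = id"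
  shows "\<forall>x. f (c x) = c (f x)"
proof
  fix y
  have ic: "inj c" and if': "inj f" using lp cG fG lp_bij bij_is_inj by blast+
  have "(gcomm c f) (c (f y)) = c (f y)" using e by simp
  thus "f (c y) = c (f y)" unfolding gcomm_def gm_def ginv_def using ic if' by simp
qed

theorem lemma4p1:
  fixes G :: "('a::linorder \<Rightarrow> 'a) set" and \<Delta> :: "'a set" and h :: "'a \<Rightarrow> 'a"
  assumes "l_perm_group G" and "transitive_grp G" and "ample G"
    and "\<forall>\<Gamma>\<in>roots G. \<exists>\<Gamma>'\<in>roots G. \<Gamma>' \<subset> \<Gamma>"
    and "\<Delta> \<in> roots G" and "h \<in> Q G \<Delta>"
  shows "(\<forall>\<Delta>'\<in>roots G. \<forall>g\<in>rst G \<Delta>'.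
            \<Delta>' \<subset> \<Delta> \<and> h ` \<Delta>' \<noteq> \<Delta>' \<and> g \<noteq> id \<longrightarrow>
              gcomm (ginv h) (gconj h g) \<noteq> id \<and> X G h \<noteq> {id} \<and>
              (\<forall>f\<in>G. gcomm (gcomm (ginv h) (gconj h g)) f = id \<longrightarrow> f ` \<Delta>' = \<Delta>') \<and>
              (\<forall>f\<in>centralizer G (X G h). f ` \<Delta>' = \<Delta>'))
       \<and> (\<forall>\<beta>\<in>supp h. \<forall>f\<in>G.
            f \<beta> = \<beta> \<or> (\<exists>g\<in>rst G \<Delta>. gcomm (gcomm (ginv h) (gconj h g)) f \<noteq> id))"
proof -
  note lp = assms(1) and tr = assms(2) and am = assms(3) and nm = assms(4)
  have hR: "h \<in> rst G \<Delta>" using assms(6) by (simp add: Q_def)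
  hence hG: "h \<in> G" and hs: "supp h \<subseteq> \<Delta>" by (auto simp: rst_def)
  have A: "\<forall>\<Delta>'\<in>roots G. \<forall>g\<in>rst G \<Delta>'. \<Delta>' \<subset> \<Delta> \<and> h ` \<Delta>' \<noteq> \<Delta>' \<and> g \<noteq> id \<longrightarrow>
              gcomm (ginv h) (gconj h g) \<noteq> id \<and> X G h \<noteq> {id} \<and>
              (\<forall>f\<in>G. gcomm (gcomm (ginv h) (gconj h g)) f = id \<longrightarrow> f ` \<Delta>' = \<Delta>') \<and>
              (\<forall>f\<in>centralizer G (X G h). f ` \<Delta>' = \<Delta>')"
  proof (intro ballI impI)
    fix \<Delta>' g assume D': "\<Delta>' \<in> roots G" and g: "g \<in> rst G \<Delta>'" and c0: "\<Delta>' \<subset> \<Delta> \<and> h ` \<Delta>' \<noteq> \<Delta>' \<and> g \<noteq> id"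
    have c: "h ` \<Delta>' \<noteq> \<Delta>' \<and> g \<noteq> id" using c0 by (rule conjunct2)
    obtain p q z where pq: "p \<noteq> q" "\<Delta>' = V G p q `` {z}" using D' roots_iff by metis
    have gG: "g \<in> G" and gs: "supp g \<subseteq> \<Delta>'" using g by (auto simp: rst_def)
    define cc where "cc = gcomm (ginv h) (gconj h g)"
    have ccG: "cc \<in> G" using comm_G[OF lp hG gG] cc_def by simp
    have pa: "cc \<noteq> id \<and> (\<forall>f\<in>G. (\<forall>x. f (cc x) = cc (f x)) \<longrightarrow> f ` \<Delta>' = \<Delta>')"
      unfolding cc_def by (rule part_a[OF lp cc_V pq(2) hG conjunct1[OF c] gG gs conjunct2[OF c]])
    have ccX: "cc \<in> X G h" using gG cc_def by (auto simp: X_def)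
    have "X G h \<noteq> {id}" using ccX pa by blast
    moreover have "\<forall>f\<in>G. gcomm cc f = id \<longrightarrow> f ` \<Delta>' = \<Delta>'"
      using pa comm_id[OF lp ccG] by blast
    moreover have "\<forall>f\<in>centralizer G (X G h). f ` \<Delta>' = \<Delta>'"
    proof
      fix f assume "f \<in> centralizer G (X G h)"
      hence fG: "f \<in> G" and "gm cc f = gm f cc" using ccX by (auto simp: centralizer_def)
      hence "\<forall>x. f (cc x) = cc (f x)" by (metis comp_apply gm_def)
      thus "f ` \<Delta>' = \<Delta>'" using pa fG by blast
    qed
    ultimately show "gcomm (ginv h) (gconj h g) \<noteq> id \<and> X G h \<noteq> {id} \<and>
              (\<forall>f\<in>G. gcomm (gcomm (ginv h) (gconj h g)) f = id \<longrightarrow> f ` \<Delta>' = \<Delta>') \<and>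
              (\<forall>f\<in>centralizer G (X G h). f ` \<Delta>' = \<Delta>')" using pa cc_def by simp
  qed
  have B: "\<forall>\<beta>\<in>supp h. \<forall>f\<in>G.
            f \<beta> = \<beta> \<or> (\<exists>g\<in>rst G \<Delta>. gcomm (gcomm (ginv h) (gconj h g)) f \<noteq> id)"
  proof (intro ballI)
    fix \<beta> f assume b: "\<beta> \<in> supp h" and fG: "f \<in> G"
    show "f \<beta> = \<beta> \<or> (\<exists>g\<in>rst G \<Delta>. gcomm (gcomm (ginv h) (gconj h g)) f \<noteq> id)"
    proof (cases "f \<beta> = \<beta>")
      case True thus ?thesis by simp
    next
      case False
      have hb: "h \<beta> \<noteq> \<beta>" using b by (simp add: supp_def)
      have ih: "inj h" using lp hG lp_bij bij_is_inj by blast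
      have hb2: "h \<beta> \<in> supp h" using hb ih by (simp add: supp_def inj_eq)
      have "\<exists>u v. u \<noteq> v \<and> V G u v \<subseteq> V G \<beta> (h \<beta>) \<and> (\<beta>, h \<beta>) \<notin> V G u v \<and> (\<beta>, f \<beta>) \<notin> V G u v"
      proof -
        obtain u1 v1 where 1: "u1 \<noteq> v1" "V G u1 v1 \<subseteq> V G \<beta> (h \<beta>)" "(\<beta>, h \<beta>) \<notin> V G u1 v1"
          using shrink[OF lp tr nm hb[symmetric]] by blast
        show ?thesis
        proof (cases "(\<beta>, f \<beta>) \<in> V G u1 v1")
          case False thus ?thesis using 1 by blast
        next
          case True
          obtain u2 v2 where 2: "u2 \<noteq> v2" "V G u2 v2 \<subseteq> V G \<beta> (f \<beta>)" "(\<beta>, f \<beta>) \<notin> V G u2 v2"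
            using shrink[OF lp tr nm False[symmetric]] by blast
          have "V G \<beta> (f \<beta>) \<subseteq> V G u1 v1" using True V_least cc_V by blast
          thus ?thesis using 1 2 by blast
        qed
      qed
      then obtain u v where uv: "u \<noteq> v" "V G u v \<subseteq> V G \<beta> (h \<beta>)"
        "(\<beta>, h \<beta>) \<notin> V G u v" "(\<beta>, f \<beta>) \<notin> V G u v" by blast
      define D' where "D' = V G u v `` {\<beta>}"
      obtain p q z where pq: "p \<noteq> q" "\<Delta> = V G p q `` {z}" using assms(5) roots_iff by metis
      have bD: "\<beta> \<in> \<Delta>" and hbD: "h \<beta> \<in> \<Delta>" using b hb2 hs by auto
      have zb: "(z, \<beta>) \<in> V G p q" using bD pq by blast
      have "(\<beta>, h \<beta>) \<in> V G p q" using pq bD hbD cc_trans[OF cc_V] cc_sym[OF cc_V] by blast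
      hence "V G \<beta> (h \<beta>) \<subseteq> V G p q" using V_least cc_V by blast
      hence "D' \<subseteq> V G p q `` {\<beta>}" using uv D'_def by blast
      also have "\<dots> = \<Delta>" using pq zb equiv_class_eq cc_V unfolding convex_congruence_def by metis
      finally have sub: "D' \<subseteq> \<Delta>" .
      have bD': "\<beta> \<in> D'" using D'_def cc_refl[OF cc_V] by blast
      have hD': "h ` D' \<noteq> D'" using bD' uv(3) D'_def by blast
      have fD': "f ` D' \<noteq> D'" using bD' uv(4) D'_def by blast
      obtain g where g: "g \<in> rst G D'" "g \<noteq> id" using nontriv[OF lp tr am uv(1) D'_def] by blast
      have gG: "g \<in> G" and gs: "supp g \<subseteq> D'" using g by (auto simp: rst_def)
      define cc where "cc = gcomm (ginv h) (gconj h g)"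
      have ccG: "cc \<in> G" using comm_G[OF lp hG gG] cc_def by simp
      have pa: "\<forall>f\<in>G. (\<forall>x. f (cc x) = cc (f x)) \<longrightarrow> f ` D' = D'"
        using part_a[OF lp cc_V D'_def hG hD' gG gs g(2)] unfolding cc_def by blast
      have "gcomm cc f \<noteq> id" using pa comm_id[OF lp ccG fG] fG fD' by blast
      moreover have "g \<in> rst G \<Delta>" using gG gs sub by (auto simp: rst_def)
      ultimately show ?thesis using cc_def by blast
    qed
  qed
  show ?thesis using A B by (rule conjI)
qed

end
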